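(* Let $Z_\phi=\{\gamma_0,\dots,\gamma_{M-1}\}$ ($M\ge1$) be a set of PGTs, indexed so that their minimal allocations satisfy $1\le \mathcal{M}_{0}\le\mathcal{M}_{1}\le\dots\le\mathcal{M}_{M-1}$ (integers), with durations $E_x:=E_{\gamma_x}>0$ and minimum separations $\tau_x:=t^{\mathrm{minsep}}_{\gamma_x}\ge0$. Define $n_0=\mathcal{M}_0-1$, $n_x=\mathcal{M}_x-\mathcal{M}_{x-1}$ for $x\ge1$, $$c_x=\max\Big(\max_{x\le y\le M-1}(E_y+\tau_y),\ \sum_{y=x}^{M-1}E_y\Big),\qquad R(Z_\phi)=\sum_{x=0}^{M-1}\big(n_x c_x+E_x\big).$$ Then for every $t_0\in\mathbb{R}$ there exists a sequentially valid schedule containing exactly $\mathcal{M}_x$ PGAs of $\gamma_x$ for every $x$, all of whose PGAs lie within $[t_0,t_0+R(Z_\phi)]$. In particular $R(Z_\phi)$ upper-bounds the minimum time required to execute a sequentially valid schedule containing $\mathcal{M}_\gamma$ PGAs of every $\gamma\in Z_\phi$.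
   Context: A PGA of a PGT $\gamma$ is a time interval $[s,s+E_\gamma)$ assigned to $\gamma$; a schedule is a finite collection of PGAs. For consecutive PGAs $[s_{x,i},e_{x,i})$, $[s_{x,i+1},e_{x,i+1})$ of the same PGT $\gamma_x$ (ordered by time), a minsep violation occurs if $s_{x,i+1}-e_{x,i}<t^{\mathrm{minsep}}_{\gamma_x}$. A schedule is sequentially valid if no two of its PGAs overlap in time and no minsep violation occurs. *)

theory Defs
  imports Complex_Main
begin

text \<open>A PGA is a pair (x, s): PGT index x and start time s; it occupies
  the time interval [s, s + E x). A schedule is a finite set of PGAs.\<close>

definition pga_interval :: "(nat \<Rightarrow> real) \<Rightarrow> nat \<times> real \<Rightarrow> real set" where
  "pga_interval E p = {snd p ..< snd p + E (fst p)}"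

definition sequentially_valid ::
  "(nat \<Rightarrow> real) \<Rightarrow> (nat \<Rightarrow> real) \<Rightarrow> (nat \<times> real) set \<Rightarrow> bool" where
  "sequentially_valid E tau S \<longleftrightarrow>
     finite S \<and>
     (\<forall>p\<in>S. \<forall>q\<in>S. p \<noteq> q \<longrightarrow> pga_interval E p \<inter> pga_interval E q = {}) \<and>
     (\<forall>x s1 s2. (x, s1) \<in> S \<and> (x, s2) \<in> S \<and> s1 < s2 \<and>
        \<not> (\<exists>s'. (x, s') \<in> S \<and> s1 < s' \<and> s' < s2)
        \<longrightarrow> \<not> (s2 - (s1 + E x) < tau x))"

definition n_coef :: "(nat \<Rightarrow> nat) \<Rightarrow> nat \<Rightarrow> real" where
  "n_coef Mm x = (if x = 0 then real (Mm 0) - 1 else real (Mm x) - real (Mm (x - 1)))"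

definition c_coef :: "nat \<Rightarrow> (nat \<Rightarrow> real) \<Rightarrow> (nat \<Rightarrow> real) \<Rightarrow> nat \<Rightarrow> real" where
  "c_coef M E tau x = max (Max ((\<lambda>y. E y + tau y) ` {x..<M})) (\<Sum>y=x..<M. E y)"

definition R_bound :: "nat \<Rightarrow> (nat \<Rightarrow> nat) \<Rightarrow> (nat \<Rightarrow> real) \<Rightarrow> (nat \<Rightarrow> real) \<Rightarrow> real" where
  "R_bound M Mm E tau = (\<Sum>x<M. n_coef Mm x * c_coef M E tau x + E x)"

end

theory Submission
  imports Defs
begin

lemma ivl_disj_aux:
  fixes a b e f :: real
  assumes "a + e \<le> b"
  shows "{a..<a+e} \<inter> {b..<b+f} = {}"
  using assms by auto

theorem mainTheorem4:
  fixes M :: nat and Mm :: "nat \<Rightarrow> nat" and E tau :: "nat \<Rightarrow> real" and t0 :: real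
  assumes "M \<ge> 1"
    and "\<And>x. x < M \<Longrightarrow> 1 \<le> Mm x"
    and "\<And>x y. x \<le> y \<Longrightarrow> y < M \<Longrightarrow> Mm x \<le> Mm y"
    and "\<And>x. x < M \<Longrightarrow> E x > 0"
    and "\<And>x. x < M \<Longrightarrow> tau x \<ge> 0"
  shows "\<exists>S. sequentially_valid E tau S \<and> fst ` S \<subseteq> {..<M} \<and>
           (\<forall>x<M. card {s. (x, s) \<in> S} = Mm x) \<and>
           (\<forall>(x, s)\<in>S. t0 \<le> s \<and> s + E x \<le> t0 + R_bound M Mm E tau)"
proof -
  define N where "N = Mm (M - 1)"
  define X where "X r = (LEAST x. r < Mm x)" for r
  define cc where "cc a = c_coef M E tau a" for a
  define off where "off a y = sum E {a..<y}" for a y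
  define T where "T r = t0 + sum (\<lambda>r'. cc (X r')) {r<..<N}" for r
  define v where "v r y = T r + off (X r) y" for r y
  define S where "S = {(y, v r y) | y r. y < M \<and> r < Mm y}"
  have M1: "M - 1 < M" using assms(1) by simp
  have MmN: "Mm y \<le> N" if "y < M" for y
    unfolding N_def using assms(3)[of y "M-1"] that by simp
  have Xle: "X r \<le> y" if "r < Mm y" for r y
    unfolding X_def by (rule Least_le) (rule that)
  have XM: "r < Mm (X r) \<and> X r < M" if "r < N" for r
  proof
    show "r < Mm (X r)" unfolding X_def by (rule LeastI[of _ "M-1"]) (use that N_def in simp)
    have "X r \<le> M - 1" using Xle[of r "M-1"] that N_def by simp
    then show "X r < M" using assms(1) by simp
  qed
  have Xmono: "X r' \<le> X r" if "r' \<le> r" "r < N" for r r'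
    using Xle[of r' "X r"] XM[OF that(2)] that(1) by simp
  have E0: "0 \<le> E z" if "z < M" for z using assms(4)[OF that] by simp
  have cc_ge: "E y + tau y \<le> cc a" if "a \<le> y" "y < M" for a y
  proof -
    have "E y + tau y \<le> Max ((\<lambda>y. E y + tau y) ` {a..<M})"
      by (rule Max_ge) (use that in auto)
    then show ?thesis unfolding cc_def c_coef_def by simp
  qed
  have cc_sum: "off a M \<le> cc a" for a
    unfolding cc_def c_coef_def off_def by simp
  have cc_nn: "0 \<le> cc a" if "a < M" for a
    using cc_ge[of a a] that assms(4)[OF that] assms(5)[OF that] by simp
  have ccX_nn: "0 \<le> cc (X r)" if "r < N" for r using cc_nn XM[OF that] by simp
  have Tgap: "T r + cc (X r) \<le> T r'" if "r' < r" "r < N" for r r'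
  proof -
    have "sum (\<lambda>r'. cc (X r')) {r'<..<N} = cc (X r) + sum (\<lambda>r'. cc (X r')) ({r'<..<N} - {r})"
      by (rule sum.remove) (use that in auto)
    moreover have "sum (\<lambda>r'. cc (X r')) {r<..<N} \<le> sum (\<lambda>r'. cc (X r')) ({r'<..<N} - {r})"
      by (rule sum_mono2) (use that ccX_nn in auto)
    ultimately show ?thesis unfolding T_def by simp
  qed
  have T_ge: "t0 \<le> T r" for r
    unfolding T_def using ccX_nn by (auto intro!: sum_nonneg)
  have off_split: "off a y + off y b = off a b" if "a \<le> y" "y \<le> b" for a y b
    unfolding off_def using that by (simp add: sum.atLeastLessThan_concat)
  have off_nn: "0 \<le> off a b" if "b \<le> M" for a b
    unfolding off_def using that E0 by (auto intro!: sum_nonneg)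
  have off_Suc: "off a (Suc y) = off a y + E y" if "a \<le> y" for a y
    unfolding off_def using that by simp
  have key: "v r1 y1 + E y1 \<le> v r2 y2"
    if "y1<M" "r1<Mm y1" "y2<M" "r2<Mm y2" "r2 < r1 \<or> (r1 = r2 \<and> y1 < y2)" for y1 r1 y2 r2
  proof -
    have r1N: "r1 < N" using MmN[OF that(1)] that(2) by simp
    have X1: "X r1 \<le> y1" using Xle that(2) by simp
    have X2: "X r2 \<le> y2" using Xle that(4) by simp
    have e: "v r1 y1 + E y1 = T r1 + off (X r1) (Suc y1)"
      unfolding v_def using off_Suc[OF X1] by simp
    show ?thesis
    proof (cases "r2 < r1")
      case True
      have "off (X r1) (Suc y1) \<le> off (X r1) M"
        using off_split[of "X r1" "Suc y1" M] off_nn[of M "Suc y1"] X1 that(1) by simp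
      also have "\<dots> \<le> cc (X r1)" by (rule cc_sum)
      finally have "v r1 y1 + E y1 \<le> T r1 + cc (X r1)" using e by simp
      also have "\<dots> \<le> T r2" using Tgap[OF True r1N] .
      also have "\<dots> \<le> v r2 y2" unfolding v_def using off_nn[of y2 "X r2"] that(3) by simp
      finally show ?thesis .
    next
      case False
      then have eq: "r1 = r2" "y1 < y2" using that(5) by auto
      have "off (X r1) (Suc y1) \<le> off (X r1) y2"
        using off_split[of "X r1" "Suc y1" y2] off_nn[of y2 "Suc y1"] X1 eq that(3) by simp
      then show ?thesis using e eq unfolding v_def by simp
    qed
  qed
  have sep: "E y + tau y \<le> v r2 y - v r1 y" if "y<M" "r1 < Mm y" "r2 < r1" for y r1 r2
  proof -
    have r1N: "r1 < N" using MmN[OF that(1)] that(2) by simp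
    have X1: "X r1 \<le> y" using Xle that(2) by simp
    have X21: "X r2 \<le> X r1" using Xmono[of r2 r1] that(3) r1N by simp
    have "off (X r1) y \<le> off (X r2) y"
      using off_split[of "X r2" "X r1" y] off_nn[of "X r1" "X r2"] X1 X21 that(1) by simp
    moreover have "T r1 + cc (X r1) \<le> T r2" using Tgap[OF that(3) r1N] .
    moreover have "E y + tau y \<le> cc (X r1)" using cc_ge[OF X1 that(1)] .
    ultimately show ?thesis unfolding v_def by simp
  qed
  have sep_lt: "v r1 y < v r2 y" if "y<M" "r1 < Mm y" "r2 < r1" for y r1 r2
    using sep[OF that] assms(4)[OF that(1)] assms(5)[OF that(1)] by simp
  have count: "sum (\<lambda>r. cc (X r)) {0<..<Mm K} = (\<Sum>x<Suc K. n_coef Mm x * cc x)"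
    if "K < M" for K
    using that
  proof (induction K)
    case 0
    have "sum (\<lambda>r. cc (X r)) {0<..<Mm 0} = sum (\<lambda>r. cc 0) {0<..<Mm 0}"
      by (rule sum.cong) (auto dest: Xle)
    also have "\<dots> = real (Mm 0 - 1) * cc 0" by simp
    also have "\<dots> = n_coef Mm 0 * cc 0"
      using assms(2)[of 0] 0 unfolding n_coef_def by (simp add: of_nat_diff)
    finally show ?case by simp
  next
    case (Suc K)
    have KM: "K < M" using Suc by simp
    have mono: "Mm K \<le> Mm (Suc K)" using assms(3)[of K "Suc K"] Suc by simp
    have pos: "1 \<le> Mm K" using assms(2) KM by simp
    have un: "{0<..<Mm (Suc K)} = {0<..<Mm K} \<union> {Mm K..<Mm (Suc K)}"
      using mono pos by auto
    have "sum (\<lambda>r. cc (X r)) {Mm K..<Mm (Suc K)} = sum (\<lambda>r. cc (Suc K)) {Mm K..<Mm (Suc K)}"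
    proof (rule sum.cong)
      fix r assume r: "r \<in> {Mm K..<Mm (Suc K)}"
      have rN: "r < N" using r MmN[OF Suc.prems] by simp
      have a: "X r \<le> Suc K" using Xle r by simp
      have "\<not> X r \<le> K"
      proof
        assume "X r \<le> K"
        then have "Mm (X r) \<le> Mm K" using assms(3) KM by simp
        then show False using XM[OF rN] r by simp
      qed
      then show "cc (X r) = cc (Suc K)" using a by (metis le_SucE)
    qed simp
    also have "\<dots> = real (Mm (Suc K) - Mm K) * cc (Suc K)" by simp
    also have "\<dots> = n_coef Mm (Suc K) * cc (Suc K)"
      unfolding n_coef_def using mono by (simp add: of_nat_diff)
    finally have "sum (\<lambda>r. cc (X r)) {0<..<Mm (Suc K)}
        = sum (\<lambda>r. cc (X r)) {0<..<Mm K} + n_coef Mm (Suc K) * cc (Suc K)"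
      unfolding un by (subst sum.union_disjoint) auto
    then show ?case using Suc.IH[OF KM] by simp
  qed
  have X0: "X 0 = 0" using Xle[of 0 0] assms(2)[of 0] assms(1) by simp
  have T0: "T 0 = t0 + (\<Sum>x<M. n_coef Mm x * cc x)"
    unfolding T_def N_def using count[OF M1] assms(1) by simp
  have R: "R_bound M Mm E tau = (\<Sum>x<M. n_coef Mm x * cc x) + off 0 M"
    unfolding R_bound_def cc_def off_def by (simp add: sum.distrib atLeast0LessThan)
  have upper: "v r y + E y \<le> t0 + R_bound M Mm E tau" if "y < M" "r < Mm y" for r y
  proof -
    have X1: "X r \<le> y" using Xle that(2) by simp
    have "v r y + E y = T r + off (X r) (Suc y)" unfolding v_def using off_Suc[OF X1] by simp
    also have "\<dots> \<le> T r + off (X r) M"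
      using off_split[of "X r" "Suc y" M] off_nn[of M "Suc y"] X1 that(1) by simp
    also have "\<dots> \<le> t0 + R_bound M Mm E tau"
    proof (cases "r = 0")
      case True
      then show ?thesis using T0 R X0 by simp
    next
      case False
      have rN: "r < N" using MmN[OF that(1)] that(2) by simp
      have "T r + off (X r) M \<le> T r + cc (X r)" using cc_sum by simp
      also have "\<dots> \<le> T 0" using Tgap[of 0 r] False rN by simp
      finally show ?thesis using T0 R off_nn[of M 0] by simp
    qed
    finally show ?thesis .
  qed
  have lower: "t0 \<le> v r y" if "y < M" for r y
    unfolding v_def using T_ge[of r] off_nn[of y "X r"] that by simp
  have memS: "(y, s) \<in> S \<longleftrightarrow> (\<exists>r. y < M \<and> r < Mm y \<and> s = v r y)" for y s
    unfolding S_def by auto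
  have finS: "finite S"
  proof (rule finite_subset)
    show "S \<subseteq> (\<lambda>(y, r). (y, v r y)) ` ({..<M} \<times> {..<N})"
      unfolding S_def using MmN by fastforce
  qed simp
  have disj: "pga_interval E p \<inter> pga_interval E q = {}" if "p \<in> S" "q \<in> S" "p \<noteq> q" for p q
  proof -
    obtain y1 s1 where ps: "p = (y1, s1)" by fastforce
    obtain y2 s2 where qs: "q = (y2, s2)" by fastforce
    obtain r1 where p: "y1 < M" "r1 < Mm y1" "s1 = v r1 y1" using \<open>p \<in> S\<close> ps memS by auto
    obtain r2 where q: "y2 < M" "r2 < Mm y2" "s2 = v r2 y2" using \<open>q \<in> S\<close> qs memS by auto
    have ne: "r1 \<noteq> r2 \<or> y1 \<noteq> y2" using that(3) p q ps qs by auto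
    have "(r2 < r1 \<or> (r1 = r2 \<and> y1 < y2)) \<or> (r1 < r2 \<or> (r2 = r1 \<and> y2 < y1))" using ne by auto
    then show ?thesis
    proof
      assume h: "r2 < r1 \<or> (r1 = r2 \<and> y1 < y2)"
      show ?thesis using key[OF p(1,2) q(1,2) h] p q ps qs unfolding pga_interval_def
        by (simp add: ivl_disj_aux)
    next
      assume h: "r1 < r2 \<or> (r2 = r1 \<and> y2 < y1)"
      show ?thesis using key[OF q(1,2) p(1,2) h] p q ps qs unfolding pga_interval_def
        by (simp add: Int_commute ivl_disj_aux)
    qed
  qed
  have msep: "\<not> (s2 - (s1 + E x) < tau x)"
    if "(x, s1) \<in> S" "(x, s2) \<in> S" "s1 < s2" for x s1 s2
  proof -
    obtain r1 where r1: "x < M" "r1 < Mm x" "s1 = v r1 x" using \<open>(x, s1) \<in> S\<close> memS by auto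
    obtain r2 where r2: "r2 < Mm x" "s2 = v r2 x" using \<open>(x, s2) \<in> S\<close> memS by auto
    have "r2 < r1"
    proof (rule ccontr)
      assume "\<not> r2 < r1"
      then have "r1 < r2 \<or> r1 = r2" by auto
      then show False
      proof
        assume "r1 < r2" then show False using sep_lt[OF r1(1) r2(1), of r1] r1 r2 that(3) by simp
      qed (use r1 r2 that(3) in simp)
    qed
    then show ?thesis using sep[OF r1(1,2) \<open>r2 < r1\<close>] r1 r2 by simp
  qed
  have card: "card {s. (x, s) \<in> S} = Mm x" if "x < M" for x
  proof -
    have eq: "{s. (x, s) \<in> S} = (\<lambda>r. v r x) ` {..<Mm x}" using memS that by auto
    have "inj_on (\<lambda>r. v r x) {..<Mm x}"
    proof (rule inj_onI)
      fix a b assume ab: "a \<in> {..<Mm x}" "b \<in> {..<Mm x}" "v a x = v b x"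
      show "a = b"
      proof (rule ccontr)
        assume "a \<noteq> b"
        then have "a < b \<or> b < a" by auto
        then show False using sep_lt[OF that] ab by force
      qed
    qed
    then show ?thesis unfolding eq by (simp add: card_image)
  qed
  show ?thesis
  proof (intro exI[of _ S] conjI)
    show "sequentially_valid E tau S"
      unfolding sequentially_valid_def using finS disj msep by blast
    show "fst ` S \<subseteq> {..<M}" unfolding S_def by auto
    show "\<forall>x<M. card {s. (x, s) \<in> S} = Mm x" using card by simp
    show "\<forall>(x, s)\<in>S. t0 \<le> s \<and> s + E x \<le> t0 + R_bound M Mm E tau"
      unfolding S_def using lower upper by auto
  qed
qed

end
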